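(* Let $k=k(n)$ and $m=m(n)$ be functions of $n$ such that $m\geq n$ and $\liminf_{n\rightarrow\infty} \frac{k^2n}{m\log n}>1$. Then asymptotically almost surely $G(n,m,k)$ contains no connected component of size $s$ with $m/k< s\leq n/2$.
   Context: The uniform random intersection graph $G(n,m,k)$ (for positive integers $k\le m$) is the random graph on a set $V$ of $n$ nodes defined as follows: fix a set $M$ of $m$ colours; to each node $v\in V$ assign a subset $F_v\subseteq M$ of exactly $k$ distinct colours, chosen uniformly at random among all $k$-subsets of $M$, independently for different nodes; distinct nodes $u,v$ are joined by an edge if and only if $F_u\cap F_v\neq\emptyset$. An event holds asymptotically almost surely if its probability tends to $1$ as $n\rightarrow\infty$. Here $\log$ denotes the natural logarithm. *)

theory Defs
  imports "HOL-Probability.Probability"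
begin

text \<open>G(n,m,k) is the uniform distribution over all such assignments
(equivalently: independent uniform k-subsets for each node).\<close>

definition ksubsets :: "nat \<Rightarrow> nat \<Rightarrow> nat set set" where
  "ksubsets m k = {S. S \<subseteq> {0..<m} \<and> card S = k}"

definition assignments :: "nat \<Rightarrow> nat \<Rightarrow> nat \<Rightarrow> (nat \<Rightarrow> nat set) set" where
  "assignments n m k = {0..<n} \<rightarrow>\<^sub>E ksubsets m k"

definition G_nmk :: "nat \<Rightarrow> nat \<Rightarrow> nat \<Rightarrow> (nat \<Rightarrow> nat set) pmf" where
  "G_nmk n m k = pmf_of_set (assignments n m k)"

definition ig_edge :: "nat \<Rightarrow> (nat \<Rightarrow> nat set) \<Rightarrow> nat \<Rightarrow> nat \<Rightarrow> bool" where
  "ig_edge n F u v \<longleftrightarrow> u < n \<and> v < n \<and> u \<noteq> v \<and> F u \<inter> F v \<noteq> {}"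

definition component :: "nat \<Rightarrow> (nat \<Rightarrow> nat set) \<Rightarrow> nat \<Rightarrow> nat set" where
  "component n F v = {u. u < n \<and> (ig_edge n F)\<^sup>*\<^sup>* v u}"

definition has_mid_component :: "nat \<Rightarrow> nat \<Rightarrow> nat \<Rightarrow> (nat \<Rightarrow> nat set) \<Rightarrow> bool" where
  "has_mid_component n m k F \<longleftrightarrow>
     (\<exists>v<n. real m / real k < real (card (component n F v))
            \<and> real (card (component n F v)) \<le> real n / 2)"

end

theory Submission
  imports Defs
begin


lemma finite_ksub: "finite {X. X \<subseteq> W \<and> card X = k}" if "finite W" for W :: "nat set"
proof -
  have "{X. X \<subseteq> W \<and> card X = k} \<subseteq> Pow W" by auto
  then show ?thesis using that by (simp add: finite_subset)
qed

lemma finite_ksubsets: "finite (ksubsets m k)"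
  unfolding ksubsets_def using finite_ksub[of "{0..<m}"] by simp

lemma finite_assign: "finite (assignments n m k)"
  unfolding assignments_def by (intro finite_PiE finite_ksubsets) simp

lemma card_ksubsets: "card (ksubsets m k) = m choose k"
  unfolding ksubsets_def using n_subsets[of "{0..<m}" k] by simp

lemma card_assign: "card (assignments n m k) = (m choose k) ^ n"
  unfolding assignments_def by (simp add: card_PiE card_ksubsets)

lemma assign_nonempty: "k \<le> m \<Longrightarrow> assignments n m k \<noteq> {}"
  unfolding assignments_def PiE_eq_empty_iff ksubsets_def
  by (auto intro!: exI[of _ "{0..<k}"])

definition badset :: "nat \<Rightarrow> nat \<Rightarrow> nat \<Rightarrow> nat set \<Rightarrow> (nat \<Rightarrow> nat set) set" where
  "badset n m k S = {F \<in> assignments n m k. \<forall>u\<in>S. \<forall>w\<in>{0..<n}-S. F u \<inter> F w = {}}"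

lemma mid_bad:
  assumes "F \<in> assignments n m k" "has_mid_component n m k F" "1 \<le> k"
  shows "\<exists>S. S \<subseteq> {0..<n} \<and> m < k * card S \<and> 2 * card S \<le> n \<and> F \<in> badset n m k S"
proof -
  obtain v where v: "v < n" "real m / real k < real (card (component n F v))"
     "real (card (component n F v)) \<le> real n / 2"
    using assms(2) unfolding has_mid_component_def by blast
  define S where "S = component n F v"
  have sub: "S \<subseteq> {0..<n}" unfolding S_def component_def by auto
  have "real m < real k * real (card S)" using v(2) assms(3) unfolding S_def
    by (simp add: divide_less_eq mult.commute)
  then have c1: "m < k * card S" by (metis of_nat_less_iff of_nat_mult)
  have c2: "2 * card S \<le> n" using v(3) unfolding S_def by linarith
  have "F \<in> badset n m k S"
    unfolding badset_def
  proof (safe intro!: assms(1))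
    fix u w x assume u: "u \<in> S" and w: "w \<in> {0..<n}" "w \<notin> S" and x: "x \<in> F u" "x \<in> F w"
    have "u < n" "(ig_edge n F)\<^sup>*\<^sup>* v u" using u unfolding S_def component_def by auto
    moreover have "u \<noteq> w" using u w by auto
    ultimately have "ig_edge n F u w" using w x unfolding ig_edge_def by auto
    then have "(ig_edge n F)\<^sup>*\<^sup>* v w" using \<open>(ig_edge n F)\<^sup>*\<^sup>* v u\<close> by auto
    then have "w \<in> S" using w unfolding S_def component_def by auto
    then show "x \<in> {}" using w by auto
  qed
  then show ?thesis using sub c1 c2 by blast
qed


lemma choose_step: "Suc k * (n choose Suc k) = (n - k) * (n choose k)"
  using binomial_absorption[of k n] binomial_absorb_comp[of n k] by simp

lemma choose_ratio:
  fixes a m k :: nat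
  assumes "a \<le> m" "0 < m"
  shows "real (a choose k) \<le> (real a / real m) ^ k * real (m choose k)"
proof (induction k)
  case 0 then show ?case by simp
next
  case (Suc k)
  show ?case
  proof (cases "k \<le> a")
    case False
    then have z: "a choose Suc k = 0" by simp
    show ?thesis unfolding z by simp
  next
    case True
    have e1: "real (Suc k) * real (a choose Suc k) = real (a - k) * real (a choose k)"
      using choose_step[of k a] by (metis of_nat_mult)
    have e2: "real (Suc k) * real (m choose Suc k) = real (m - k) * real (m choose k)"
      using choose_step[of k m] by (metis of_nat_mult)
    have r: "real (a - k) \<le> (real a / real m) * real (m - k)"
    proof -
      have "real a * real k \<le> real k * real m" using assms by (metis mult.commute mult_right_mono of_nat_0_le_iff of_nat_le_iff)
      then show ?thesis using True assms by (simp add: of_nat_diff field_simps)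
    qed
    have "real (Suc k) * real (a choose Suc k) \<le> real (a - k) * ((real a / real m) ^ k * real (m choose k))"
      using e1 Suc.IH by (simp add: mult_left_mono)
    also have "\<dots> \<le> (real a / real m) * real (m - k) * ((real a / real m) ^ k * real (m choose k))"
      using r by (intro mult_right_mono) auto
    also have "\<dots> = (real a / real m) ^ Suc k * (real (m - k) * real (m choose k))"
      by (simp add: algebra_simps)
    also have "\<dots> = real (Suc k) * ((real a / real m) ^ Suc k * real (m choose Suc k))"
      using e2 by (metis mult.left_commute)
    finally show ?thesis by (simp only: mult_le_cancel_left_pos of_nat_0_less_iff zero_less_Suc)
  qed
qed

lemma prod_if_const:
  fixes n :: nat
  assumes "S \<subseteq> {0..<n}"
  shows "(\<Prod>u\<in>{0..<n}. if u \<in> S then (c::real) else 1) = c ^ card S"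
proof -
  have "(\<Prod>u\<in>{0..<n}. if u \<in> S then (c::real) else 1) = (\<Prod>u\<in>{0..<n} \<inter> {x. x \<in> S}. c) * (\<Prod>u\<in>{0..<n} \<inter> - {x. x \<in> S}. 1)"
    using prod.If_cases[OF finite_atLeastLessThan[of 0 n], of "\<lambda>x. x \<in> S" "\<lambda>_. c" "\<lambda>_. 1"] by simp
  also have "{0..<n} \<inter> {x. x \<in> S} = S" using assms by auto
  finally show ?thesis by simp
qed

lemma B1:
  assumes S: "S \<subseteq> {0..<n}" and mk: "m \<le> k * card S" and m: "0 < m"
  shows "real (card {F \<in> assignments n m k. 8 * card (\<Union>(F ` S)) \<le> m})
          \<le> (1/4)^m * real (card (assignments n m k))"
proof -
  let ?A = "assignments n m k"
  define Ws where "Ws = {W. W \<subseteq> {0..<m} \<and> 8 * card W \<le> m}"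
  define C where "C W = PiE {0..<n} (\<lambda>u. if u \<in> S then {X. X \<subseteq> W \<and> card X = k} else ksubsets m k)" for W
  have sub: "{F \<in> ?A. 8 * card (\<Union>(F ` S)) \<le> m} \<subseteq> (\<Union>W\<in>Ws. C W)"
  proof
    fix F assume F: "F \<in> {F \<in> ?A. 8 * card (\<Union>(F ` S)) \<le> m}"
    let ?W = "\<Union>(F ` S)"
    have "?W \<subseteq> {0..<m}" using F S unfolding assignments_def ksubsets_def by (force simp: PiE_iff)
    then have "?W \<in> Ws" using F by (auto simp: Ws_def)
    moreover have "F \<in> C ?W" using F unfolding C_def assignments_def ksubsets_def by (auto simp: PiE_iff)
    ultimately show "F \<in> (\<Union>W\<in>Ws. C W)" by blast
  qed
  have WsP: "Ws \<subseteq> Pow {0..<m}" unfolding Ws_def by auto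
  have finWs: "finite Ws" using WsP finite_subset by blast
  have cardWs: "card Ws \<le> 2 ^ m" using card_mono[OF _ WsP] card_Pow[of "{0..<m}"] by simp
  have cC: "real (card (C W)) \<le> (1/8)^m * real (card ?A)" if W: "W \<in> Ws" for W
  proof -
    have Wf: "finite W" "card W \<le> m" "8 * card W \<le> m" using W unfolding Ws_def
      by (auto intro: finite_subset card_mono[of "{0..<m}", simplified])
    have "card (C W) = (\<Prod>u\<in>{0..<n}. card (if u \<in> S then {X. X \<subseteq> W \<and> card X = k} else ksubsets m k))"
      unfolding C_def by (simp add: card_PiE)
    also have "\<dots> = (\<Prod>u\<in>{0..<n}. if u \<in> S then card W choose k else m choose k)"
      by (intro prod.cong refl) (simp add: n_subsets Wf card_ksubsets)
    finally have "real (card (C W)) = (\<Prod>u\<in>{0..<n}. if u \<in> S then real (card W choose k) else real (m choose k))"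
      by (simp add: if_distrib)
    also have "\<dots> \<le> (\<Prod>u\<in>{0..<n}. (if u \<in> S then (1/8)^k else 1) * real (m choose k))"
    proof (intro prod_mono conjI)
      fix u
      have "real (card W choose k) \<le> (real (card W) / real m) ^ k * real (m choose k)"
        using choose_ratio[OF Wf(2) m] .
      also have "\<dots> \<le> (1/8) ^ k * real (m choose k)"
        using Wf(3) m by (intro mult_right_mono power_mono) (auto simp: field_simps)
      finally show "(if u \<in> S then real (card W choose k) else real (m choose k))
          \<le> (if u \<in> S then (1/8)^k else 1) * real (m choose k)" by simp
    qed auto
    also have "\<dots> = ((1/8)^k) ^ card S * real (m choose k) ^ n"
      by (simp add: prod.distrib prod_if_const[OF S])
    also have "\<dots> \<le> (1/8) ^ m * real (card ?A)"
    proof -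
      have "((1/8::real)^k) ^ card S = (1/8) ^ (k * card S)" by (simp add: power_mult)
      also have "\<dots> \<le> (1/8) ^ m" using mk by (intro power_decreasing) auto
      finally show ?thesis by (simp add: card_assign mult_right_mono)
    qed
    finally show ?thesis .
  qed
  have finC: "\<forall>W\<in>Ws. finite (C W)"
  proof
    fix W assume "W \<in> Ws"
    then have "finite W" unfolding Ws_def using finite_subset by auto
    then show "finite (C W)" unfolding C_def
      by (intro finite_PiE) (auto simp: finite_ksub finite_ksubsets)
  qed
  have "card {F \<in> ?A. 8 * card (\<Union>(F ` S)) \<le> m} \<le> card (\<Union>W\<in>Ws. C W)"
    using sub finWs finC by (intro card_mono) auto
  also have "\<dots> \<le> (\<Sum>W\<in>Ws. card (C W))" by (rule card_UN_le[OF finWs])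
  finally have "real (card {F \<in> ?A. 8 * card (\<Union>(F ` S)) \<le> m}) \<le> real (\<Sum>W\<in>Ws. card (C W))"
    by (simp only: of_nat_le_iff)
  also have "\<dots> = (\<Sum>W\<in>Ws. real (card (C W)))" by simp
  also have "\<dots> \<le> (\<Sum>W\<in>Ws. (1/8)^m * real (card ?A))" by (rule sum_mono[OF cC])
  also have "\<dots> = real (card Ws) * ((1/8)^m * real (card ?A))" by simp
  also have "\<dots> \<le> 2 ^ m * ((1/8)^m * real (card ?A))"
    using cardWs by (intro mult_right_mono) (auto simp: numeral_power_le_of_nat_cancel_iff)
  also have "\<dots> = (2 * (1/8))^m * real (card ?A)"
    by (simp only: power_mult_distrib mult.assoc)
  also have "\<dots> = (1/4)^m * real (card ?A)" by simp
  finally show ?thesis .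
qed


lemma B2:
  fixes n m k :: nat
  assumes S: "S \<subseteq> {0..<n}" and m: "0 < m"
  shows "real (card {F \<in> assignments n m k. m < 8 * card (\<Union>(F ` S)) \<and>
             (\<forall>w\<in>{0..<n} - S. F w \<inter> \<Union>(F ` S) = {})})
         \<le> (7/8)^(k * card ({0..<n} - S)) * real (card (assignments n m k))"
proof -
  define T where "T = {0..<n} - S"
  let ?A = "assignments n m k"
  let ?B = "{F \<in> ?A. m < 8 * card (\<Union>(F ` S)) \<and> (\<forall>w\<in>{0..<n} - S. F w \<inter> \<Union>(F ` S) = {})}"
  define P where "P = {G \<in> PiE S (\<lambda>_. ksubsets m k). m < 8 * card (\<Union>(G ` S))}"
  define Q where "Q G = PiE T (\<lambda>_. {X. X \<subseteq> {0..<m} - \<Union>(G ` S) \<and> card X = k})" for G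
  define \<phi> where "\<phi> F = (restrict F S, restrict F T)" for F :: "nat \<Rightarrow> nat set"
  have inj: "inj_on \<phi> ?B"
  proof (rule inj_onI)
    fix F F' assume F: "F \<in> ?B" and F': "F' \<in> ?B" and e: "\<phi> F = \<phi> F'"
    then have e1: "restrict F S = restrict F' S" and e2: "restrict F T = restrict F' T"
      unfolding \<phi>_def by auto
    show "F = F'"
    proof
      fix x
      show "F x = F' x"
      proof (cases "x \<in> S")
        case True then show ?thesis using fun_cong[OF e1, of x] by simp
      next
        case False
        show ?thesis
        proof (cases "x \<in> T")
          case True then show ?thesis using fun_cong[OF e2, of x] by simp
        next
          case False
          then have "x \<notin> {0..<n}" using \<open>x \<notin> S\<close> unfolding T_def by blast
          moreover have "F \<in> PiE {0..<n} (\<lambda>_. ksubsets m k)" "F' \<in> PiE {0..<n} (\<lambda>_. ksubsets m k)"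
            using F F' unfolding assignments_def by auto
          ultimately show ?thesis using PiE_arb by metis
        qed
      qed
    qed
  qed
  have img: "\<phi> ` ?B \<subseteq> Sigma P Q"
  proof
    fix y assume "y \<in> \<phi> ` ?B"
    then obtain F where F: "F \<in> ?B" and y: "y = \<phi> F" by blast
    have Fk: "F u \<in> ksubsets m k" if "u < n" for u
      using F that unfolding assignments_def by auto
    have im: "restrict F S ` S = F ` S" by auto
    have "restrict F S \<in> P" unfolding P_def im using F Fk S by auto
    moreover have "restrict F T \<in> Q (restrict F S)" unfolding Q_def im
    proof (intro PiE_I)
      fix w assume w: "w \<in> T"
      then have "w < n" "w \<in> {0..<n} - S" unfolding T_def by auto
      moreover have "F w \<inter> \<Union>(F ` S) = {}" using F \<open>w \<in> {0..<n} - S\<close> by blast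
      ultimately show "restrict F T w \<in> {X. X \<subseteq> {0..<m} - \<Union>(F ` S) \<and> card X = k}"
        using Fk[of w] w unfolding ksubsets_def by auto
    next
      fix w assume "w \<notin> T" then show "restrict F T w = undefined" by simp
    qed
    ultimately show "y \<in> Sigma P Q" unfolding y \<phi>_def by auto
  qed
  have PA: "P \<subseteq> PiE S (\<lambda>_. ksubsets m k)" unfolding P_def by auto
  have finS: "finite S" using S finite_subset by blast
  have finT: "finite T" unfolding T_def by auto
  have finP: "finite P" using PA finS finite_ksubsets finite_PiE finite_subset by metis
  have finQ: "\<forall>G\<in>P. finite (Q G)" unfolding Q_def
    by (auto intro!: finite_PiE finT finite_ksub)
  have cardP: "card P \<le> (m choose k) ^ card S"
    using card_mono[OF _ PA] finS by (simp add: card_PiE card_ksubsets finite_PiE finite_ksubsets)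
  have cQ: "real (card (Q G)) \<le> ((7/8)^k * real (m choose k)) ^ card T" if G: "G \<in> P" for G
  proof -
    let ?U = "\<Union>(G ` S)"
    have Usub: "?U \<subseteq> {0..<m}" using G unfolding P_def ksubsets_def by (auto simp: PiE_iff)
    have U8: "m < 8 * card ?U" using G unfolding P_def by auto
    have cU: "card ?U \<le> m" using card_mono[OF _ Usub] by simp
    have "card ({0..<m} - ?U) = m - card ?U" using Usub by (simp add: card_Diff_subset finite_subset)
    then have "card (Q G) = ((m - card ?U) choose k) ^ card T"
      unfolding Q_def by (simp add: card_PiE finT n_subsets)
    then have "real (card (Q G)) = real ((m - card ?U) choose k) ^ card T" by simp
    also have "\<dots> \<le> ((7/8)^k * real (m choose k)) ^ card T"
    proof (intro power_mono)
      have "real ((m - card ?U) choose k) \<le> (real (m - card ?U) / real m) ^ k * real (m choose k)"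
        using choose_ratio[of "m - card ?U" m k] m by simp
      also have "\<dots> \<le> (7/8)^k * real (m choose k)"
        using U8 cU m by (intro mult_right_mono power_mono) (auto simp: field_simps of_nat_diff)
      finally show "real ((m - card ?U) choose k) \<le> (7/8)^k * real (m choose k)" .
    qed simp
    finally show ?thesis .
  qed
  have "card ?B \<le> card (Sigma P Q)"
    using inj img finP finQ by (intro card_inj_on_le[of \<phi>]) (auto intro: finite_SigmaI)
  also have "\<dots> = (\<Sum>G\<in>P. card (Q G))" using finP finQ by simp
  finally have "real (card ?B) \<le> real (\<Sum>G\<in>P. card (Q G))" by (simp only: of_nat_le_iff)
  also have "\<dots> = (\<Sum>G\<in>P. real (card (Q G)))" by simp
  also have "\<dots> \<le> (\<Sum>G\<in>P. ((7/8)^k * real (m choose k)) ^ card T)" by (rule sum_mono[OF cQ])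
  also have "\<dots> = real (card P) * ((7/8)^k * real (m choose k)) ^ card T" by simp
  also have "\<dots> \<le> real (m choose k) ^ card S * ((7/8)^k * real (m choose k)) ^ card T"
    using cardP by (intro mult_right_mono) (auto simp flip: of_nat_power)
  also have "\<dots> = (7/8)^(k * card T) * real (m choose k) ^ (card S + card T)"
    by (simp add: power_mult_distrib power_mult power_add)
  also have "card S + card T = n" unfolding T_def using S finS
    by (metis card_Diff_subset card_atLeastLessThan diff_zero le_add_diff_inverse card_mono finite_atLeastLessThan)
  finally show ?thesis unfolding T_def by (simp add: card_assign)
qed


lemma bad_bound:
  assumes k1: "1 \<le> k" and km: "k \<le> m" and nm: "n \<le> m" and k12: "12 \<le> k"
  shows "real (card {F \<in> assignments n m k. has_mid_component n m k F})
         \<le> 2^n * ((1/4)^n + (7/8)^(6*n)) * real (card (assignments n m k))"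
proof -
  let ?A = "assignments n m k"
  let ?E = "{F \<in> ?A. has_mid_component n m k F}"
  define SS where "SS = {S. S \<subseteq> {0..<n} \<and> m < k * card S \<and> 2 * card S \<le> n}"
  have m: "0 < m" using k1 km by simp
  have Esub: "?E \<subseteq> (\<Union>S\<in>SS. badset n m k S)"
    using mid_bad[OF _ _ k1] unfolding SS_def by blast
  have SSP: "SS \<subseteq> Pow {0..<n}" unfolding SS_def by auto
  have finSS: "finite SS" using SSP finite_subset by blast
  have cardSS: "card SS \<le> 2 ^ n" using card_mono[OF _ SSP] card_Pow[of "{0..<n}"] by simp
  have finbad: "finite (badset n m k S)" for S
    unfolding badset_def using finite_assign by simp
  have cbad: "real (card (badset n m k S)) \<le> ((1/4)^n + (7/8)^(6*n)) * real (card ?A)" if S: "S \<in> SS" for S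
  proof -
    have Ssub: "S \<subseteq> {0..<n}" and mk: "m < k * card S" and s2: "2 * card S \<le> n"
      using S unfolding SS_def by auto
    let ?B1 = "{F \<in> ?A. 8 * card (\<Union>(F ` S)) \<le> m}"
    let ?B2 = "{F \<in> ?A. m < 8 * card (\<Union>(F ` S)) \<and> (\<forall>w\<in>{0..<n} - S. F w \<inter> \<Union>(F ` S) = {})}"
    have "badset n m k S \<subseteq> ?B1 \<union> ?B2" unfolding badset_def by auto
    then have "card (badset n m k S) \<le> card (?B1 \<union> ?B2)"
      by (intro card_mono) (auto intro: finite_subset[OF _ finite_assign])
    also have "\<dots> \<le> card ?B1 + card ?B2" by (rule card_Un_le)
    finally have "real (card (badset n m k S)) \<le> real (card ?B1) + real (card ?B2)"
      by linarith
    also have "\<dots> \<le> (1/4)^m * real (card ?A) + (7/8)^(k * card ({0..<n} - S)) * real (card ?A)"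
      using B1[OF Ssub _ m, of k] B2[OF Ssub m, of k] mk by simp
    also have "\<dots> \<le> (1/4)^n * real (card ?A) + (7/8)^(6*n) * real (card ?A)"
    proof (intro add_mono mult_right_mono)
      show "(1/4::real)^m \<le> (1/4)^n" using nm by (intro power_decreasing) auto
      have cT: "card ({0..<n} - S) = n - card S" using Ssub
        by (simp add: card_Diff_subset finite_subset)
      have "6 * n \<le> 12 * (n - card S)" using s2 by linarith
      also have "\<dots> \<le> k * (n - card S)" using k12 by (rule mult_le_mono1)
      finally have "6 * n \<le> k * card ({0..<n} - S)" using cT by simp
      then show "(7/8::real)^(k * card ({0..<n} - S)) \<le> (7/8)^(6*n)"
        by (intro power_decreasing) auto
    qed auto
    finally show ?thesis by (simp add: algebra_simps)
  qed
  have "card ?E \<le> card (\<Union>S\<in>SS. badset n m k S)"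
    using Esub finSS finbad by (intro card_mono) auto
  also have "\<dots> \<le> (\<Sum>S\<in>SS. card (badset n m k S))" by (rule card_UN_le[OF finSS])
  finally have "real (card ?E) \<le> real (\<Sum>S\<in>SS. card (badset n m k S))" by (simp only: of_nat_le_iff)
  also have "\<dots> = (\<Sum>S\<in>SS. real (card (badset n m k S)))" by simp
  also have "\<dots> \<le> (\<Sum>S\<in>SS. ((1/4)^n + (7/8)^(6*n)) * real (card ?A))" by (rule sum_mono[OF cbad])
  also have "\<dots> = real (card SS) * (((1/4)^n + (7/8)^(6*n)) * real (card ?A))" by simp
  also have "\<dots> \<le> 2 ^ n * (((1/4)^n + (7/8)^(6*n)) * real (card ?A))"
  proof (intro mult_right_mono)
    show "real (card SS) \<le> 2 ^ n" using cardSS by (metis of_nat_le_iff of_nat_numeral of_nat_power)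
  qed auto
  finally show ?thesis by (simp add: algebra_simps)
qed

lemma prob_bound:
  assumes k1: "1 \<le> k" and km: "k \<le> m" and nm: "n \<le> m" and k12: "12 \<le> k"
  shows "1 - 2^n * ((1/4)^n + (7/8)^(6*n)) \<le>
     measure_pmf.prob (G_nmk n m k) {F. \<not> has_mid_component n m k F}"
proof -
  let ?A = "assignments n m k"
  let ?E = "{F \<in> ?A. has_mid_component n m k F}"
  have ne: "?A \<noteq> {}" using assign_nonempty[OF km] .
  have fin: "finite ?A" by (rule finite_assign)
  have pos: "0 < real (card ?A)" using ne fin by (simp add: card_gt_0_iff)
  have split: "card (?A \<inter> {F. \<not> has_mid_component n m k F}) + card ?E = card ?A"
  proof -
    have "?A = (?A \<inter> {F. \<not> has_mid_component n m k F}) \<union> ?E" by auto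
    moreover have "(?A \<inter> {F. \<not> has_mid_component n m k F}) \<inter> ?E = {}" by auto
    ultimately show ?thesis using fin
      by (metis (no_types, lifting) card_Un_disjoint finite_Un)
  qed
  have "measure_pmf.prob (G_nmk n m k) {F. \<not> has_mid_component n m k F}
        = real (card (?A \<inter> {F. \<not> has_mid_component n m k F})) / real (card ?A)"
    unfolding G_nmk_def using ne fin by (simp add: measure_pmf_of_set)
  also have "\<dots> = 1 - real (card ?E) / real (card ?A)"
    using split pos by (simp add: field_simps flip: of_nat_add)
  finally have eq: "measure_pmf.prob (G_nmk n m k) {F. \<not> has_mid_component n m k F}
        = 1 - real (card ?E) / real (card ?A)" .
  have "real (card ?E) / real (card ?A) \<le> 2^n * ((1/4)^n + (7/8)^(6*n))"
    using bad_bound[OF k1 km nm k12] pos by (simp add: divide_le_eq)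
  then show ?thesis unfolding eq by linarith
qed


lemma ln_ev: "eventually (\<lambda>n::nat. 144 \<le> ln (real n)) sequentially"
proof (rule eventually_sequentiallyI[of "nat \<lceil>exp (144::real)\<rceil>"])
  fix n :: nat assume "nat \<lceil>exp (144::real)\<rceil> \<le> n"
  then have "exp 144 \<le> real n" by linarith
  moreover have "0 < real n" using \<open>exp 144 \<le> real n\<close> exp_gt_zero[of "144::real"] by linarith
  ultimately have "ln (exp 144) \<le> ln (real n)" by (subst ln_le_cancel_iff) auto
  then show "144 \<le> ln (real n)" by simp
qed

theorem lemma8:
  fixes k m :: "nat \<Rightarrow> nat"
  assumes "\<And>n. 1 \<le> k n" and "\<And>n. k n \<le> m n" and "\<And>n. n \<le> m n"
    and "liminf (\<lambda>n. ereal (real (k n) ^ 2 * real n / (real (m n) * ln (real n)))) > 1"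
  shows "(\<lambda>n. measure_pmf.prob (G_nmk n (m n) (k n))
                {F. \<not> has_mid_component n (m n) (k n) F}) \<longlonglongrightarrow> 1"
proof -
  define e :: "nat \<Rightarrow> real" where "e n = 2^n * ((1/4)^n + (7/8)^(6*n))" for n
  have e_eq: "e n = (1/2)^n + (2*(7/8)^6)^n" for n
  proof -
    have a: "(2::real)^n * (1/4)^n = (2 * (1/4))^n" by (rule power_mult_distrib[symmetric])
    have b: "(7/8::real)^(6*n) = ((7/8)^6)^n" by (rule power_mult)
    have c: "(2::real)^n * ((7/8)^6)^n = (2 * (7/8)^6)^n" by (rule power_mult_distrib[symmetric])
    show ?thesis unfolding e_def distrib_left a b c by simp
  qed
  have "(\<lambda>n. (1/2::real)^n + (2*(7/8)^6)^n) \<longlonglongrightarrow> 0 + 0"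
  proof (intro tendsto_add LIMSEQ_power_zero)
    show "norm (1/2::real) < 1" by simp
    have "(2::real) * (7/8)^6 = 117649 / 131072" by (simp add: power_divide)
    then show "norm (2 * (7/8)^6 :: real) < 1" by simp
  qed
  then have e0: "e \<longlonglongrightarrow> 0" unfolding e_eq by simp
  then have e1: "(\<lambda>n. 1 - e n) \<longlonglongrightarrow> 1"
    using tendsto_diff[OF tendsto_const e0, of 1] by simp
  have ev1: "eventually (\<lambda>n. ereal (real (k n) ^ 2 * real n / (real (m n) * ln (real n))) > 1) sequentially"
    using less_LiminfD[OF assms(4)] .
  have ev12: "eventually (\<lambda>n. 12 \<le> k n) sequentially"
    using ev1 ln_ev eventually_ge_at_top[of 2]
  proof eventually_elim
    case (elim n)
    have n2: "2 \<le> real n" using elim(3) by simp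
    have lnp: "0 < ln (real n)" using n2 by simp
    have mpos: "real n \<le> real (m n)" using assms(3) by simp
    have dpos: "0 < real (m n) * ln (real n)" using lnp mpos n2 by simp
    have "1 < real (k n) ^ 2 * real n / (real (m n) * ln (real n))" using elim(1) by simp
    then have "real (m n) * ln (real n) < real (k n) ^ 2 * real n" using dpos by (simp add: less_divide_eq)
    moreover have "real n * ln (real n) \<le> real (m n) * ln (real n)" using mpos lnp by (simp add: mult_right_mono)
    ultimately have "real n * ln (real n) < real n * real (k n) ^ 2" by (simp add: mult.commute)
    then have "ln (real n) < real (k n) ^ 2" using n2 by simp
    then have "144 < real (k n) ^ 2" using elim(2) by simp
    then have "12 < real (k n)"
    proof -
      assume h: "144 < real (k n) ^ 2"
      show ?thesis
      proof (rule ccontr)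
        assume "\<not> 12 < real (k n)"
        then have "real (k n) ^ 2 \<le> 12 ^ 2" by (intro power_mono) auto
        then show False using h by simp
      qed
    qed
    then show ?case by simp
  qed
  have lower: "eventually (\<lambda>n. 1 - e n \<le> measure_pmf.prob (G_nmk n (m n) (k n))
                {F. \<not> has_mid_component n (m n) (k n) F}) sequentially"
    using ev12 by eventually_elim (use prob_bound assms(1-3) in \<open>simp add: e_def\<close>)
  have upper: "eventually (\<lambda>n. measure_pmf.prob (G_nmk n (m n) (k n))
                {F. \<not> has_mid_component n (m n) (k n) F} \<le> 1) sequentially"
    by (simp add: measure_pmf.prob_le_1)
  show ?thesis by (rule tendsto_sandwich[OF lower upper e1 tendsto_const])
qed

end
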